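(* There exist (connected) bipartite graphs $G$ and integers $k$ with $k-1\ge\chi(G)$ for which $\mathrm{sn}(G,k)<\mathrm{sn}(G,k-1)$; that is, $\mathrm{sn}(G,k)$ is not in general monotone non-decreasing in $k$.
   Context: All graphs are finite and simple. For a graph $G=(V,E)$ and an integer $k\ge\chi(G)$, a proper $k$-colouring is a map $c:V\to[k]$ with $c(u)\neq c(v)$ for every edge $uv$. $\mathrm{sn}(G,k)$ is the minimum number of vertices of $G$ that have to be coloured in a partial colouring such that there exists a unique proper $k$-colouring of $G$ extending it. *)

theory Defs
  imports Main
begin

definition simple_graph :: "'a set \<Rightarrow> 'a set set \<Rightarrow> bool" where
  "simple_graph V E \<longleftrightarrow> finite V \<and>
     (\<forall>e\<in>E. \<exists>u v. u \<noteq> v \<and> u \<in> V \<and> v \<in> V \<and> e = {u, v})"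

definition connected_graph :: "'a set \<Rightarrow> 'a set set \<Rightarrow> bool" where
  "connected_graph V E \<longleftrightarrow> V \<noteq> {} \<and>
     (\<forall>u\<in>V. \<forall>v\<in>V. (\<lambda>x y. {x, y} \<in> E)\<^sup>*\<^sup>* u v)"

definition bipartite_graph :: "'a set \<Rightarrow> 'a set set \<Rightarrow> bool" where
  "bipartite_graph V E \<longleftrightarrow> (\<exists>A B. A \<union> B = V \<and> A \<inter> B = {} \<and>
     (\<forall>u v. {u, v} \<in> E \<longrightarrow> (u \<in> A \<and> v \<in> B) \<or> (u \<in> B \<and> v \<in> A)))"

text \<open>A proper k-colouring c : V -> [k] = {1..k}; outside V it is fixed to 0 so that
  colourings are identified with their restriction to V.\<close>
definition proper_colouring :: "'a set \<Rightarrow> 'a set set \<Rightarrow> nat \<Rightarrow> ('a \<Rightarrow> nat) \<Rightarrow> bool" where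
  "proper_colouring V E k c \<longleftrightarrow> (\<forall>v\<in>V. c v \<in> {1..k}) \<and> (\<forall>v. v \<notin> V \<longrightarrow> c v = 0) \<and>
     (\<forall>u v. {u, v} \<in> E \<longrightarrow> c u \<noteq> c v)"

definition chromatic_number :: "'a set \<Rightarrow> 'a set set \<Rightarrow> nat" where
  "chromatic_number V E = (LEAST k. \<exists>c. proper_colouring V E k c)"

definition sn :: "'a set \<Rightarrow> 'a set set \<Rightarrow> nat \<Rightarrow> nat" where
  "sn V E k = (LEAST n. \<exists>S p. S \<subseteq> V \<and> card S = n \<and>
      (\<exists>!c. proper_colouring V E k c \<and> (\<forall>v\<in>S. c v = p v)))"

end

theory Submission
  imports Defs
begin

lemma caseA:
  fixes al be :: "nat \<Rightarrow> nat"
  assumes R: "\<forall>i<6. al i \<in> {1..5} \<and> be i \<in> {1..5}"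
  and P: "\<forall>i<6. \<forall>j<6. i \<noteq> j \<longrightarrow> al i \<noteq> be j"
  and FA: "\<forall>i<6. \<forall>x\<in>{1..5}. x \<noteq> al i \<longrightarrow> (\<exists>j<6. j \<noteq> i \<and> be j = x)"
  shows False
proof (cases "\<exists>i<6. \<exists>i'<6. al i \<noteq> al i'")
  case True
  then obtain i i' where ii: "i<6" "i'<6" "al i \<noteq> al i'" by blast
  have match: "be m = al m" if m6: "m<6" for m
  proof -
    have am: "al m \<in> {1..5}" using R m6 by blast
    show ?thesis
    proof (cases "al m = al i")
      case False
      then obtain j where j: "j<6" "j \<noteq> i" "be j = al m" using FA[rule_format, OF ii(1) am] by auto
      show ?thesis
      proof (rule ccontr)
        assume "be m \<noteq> al m"
        then have "j \<noteq> m" using j by auto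
        then show False using P[rule_format, of m j] m6 j by auto
      qed
    next
      case True
      then have ne: "al m \<noteq> al i'" using ii by simp
      then obtain j where j: "j<6" "j \<noteq> i'" "be j = al m" using FA[rule_format, OF ii(2) am] by auto
      show ?thesis
      proof (rule ccontr)
        assume "be m \<noteq> al m"
        then have "j \<noteq> m" using j by auto
        then show False using P[rule_format, of m j] m6 j by auto
      qed
    qed
  qed
  have inj: "inj_on al {..<6}"
  proof (rule inj_onI)
    fix l l' assume l: "l \<in> {..<6::nat}" "l' \<in> {..<6::nat}" "al l = al l'"
    show "l = l'"
    proof (rule ccontr)
      assume "l \<noteq> l'"
      moreover have "be l' = al l'" using match l by auto
      ultimately show False using P[rule_format, of l l'] l by auto
    qed
  qed
  have "card (al ` {..<6}) = 6" using card_image[OF inj] by simp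
  moreover have "al ` {..<6} \<subseteq> {1..5}" using R by auto
  then have "card (al ` {..<6}) \<le> 5" using card_mono[of "{1..5::nat}"] by fastforce
  ultimately show False by simp
next
  case False
  define x where "x = al 0"
  have allx: "\<forall>i<6. al i = x"
  proof (intro allI impI)
    fix i :: nat assume "i < 6"
    moreover have "(0::nat) < 6" by simp
    ultimately show "al i = x" using False x_def by blast
  qed
  define W where "W = {1..5::nat} - {x}"
  define F where "F w = {j. j<6 \<and> be j = w}" for w
  have x15: "x \<in> {1..5}" using R x_def by auto
  have cW: "card W = 4" using x15 unfolding W_def by (simp add: card_Diff_singleton)
  have fib: "card (F w) \<ge> 2" if w: "w \<in> W" for w
  proof -
    have w15: "w \<in> {1..5}" "w \<noteq> x" using w unfolding W_def by auto
    obtain j1 where j1: "j1<6" "j1 \<noteq> 0" "be j1 = w" using FA[rule_format, of 0 w] w15 allx by auto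
    obtain j2 where j2: "j2<6" "j2 \<noteq> j1" "be j2 = w" using FA[rule_format, of j1 w] w15 allx j1 by auto
    have "{j1,j2} \<subseteq> F w" using j1 j2 unfolding F_def by auto
    moreover have "finite (F w)" unfolding F_def by auto
    ultimately have "card {j1,j2} \<le> card (F w)" by (rule card_mono[rotated])
    then show ?thesis using j2 by simp
  qed
  have "card (\<Union>w\<in>W. F w) = (\<Sum>w\<in>W. card (F w))"
    by (rule card_UN_disjoint) (auto simp: W_def F_def)
  moreover have "(\<Sum>w\<in>W. card (F w)) \<ge> (\<Sum>w\<in>W. 2)" by (rule sum_mono) (use fib in auto)
  moreover have "(\<Union>w\<in>W. F w) \<subseteq> {..<6}" unfolding F_def by auto
  then have "card (\<Union>w\<in>W. F w) \<le> 6" using card_mono[of "{..<6::nat}"] by fastforce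
  ultimately show False using cW by simp
qed


lemma case1:
  fixes al be :: "nat \<Rightarrow> nat" and UA UB :: "nat set"
  assumes R: "\<forall>i<6. al i \<in> {1..5} \<and> be i \<in> {1..5}"
  and P: "\<forall>i<6. \<forall>j<6. i \<noteq> j \<longrightarrow> al i \<noteq> be j"
  and FA: "\<forall>i\<in>UA. \<forall>x\<in>{1..5}. x \<noteq> al i \<longrightarrow> (\<exists>j<6. j \<noteq> i \<and> be j = x)"
  and FB: "\<forall>j\<in>UB. \<forall>x\<in>{1..5}. x \<noteq> be j \<longrightarrow> (\<exists>i<6. i \<noteq> j \<and> al i = x)"
  and UA6: "UA \<subseteq> {..<6}" and UB6: "UB \<subseteq> {..<6}" and cU: "card UA + card UB \<ge> 6"
  and i0: "i0 \<in> UA" and j0: "j0 \<in> UB"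
  shows "\<exists>x y r. x \<in> {1..5} \<and> y \<in> {1..5} \<and> x \<noteq> y \<and> r < 6 \<and> al r \<in> {x,y} \<and>
     (\<forall>i<6. al i \<in> {x,y} \<longrightarrow> i \<in> UA) \<and> (\<forall>j<6. be j \<in> {x,y} \<longrightarrow> j \<in> UB)"
proof -
  define x where "x = al i0"
  define y where "y = be j0"
  have i06: "i0 < 6" using i0 UA6 by auto
  have j06: "j0 < 6" using j0 UB6 by auto
  have x15: "x \<in> {1..5}" using R i06 x_def by blast
  have y15: "y \<in> {1..5}" using R j06 y_def by blast
  have S1: "be l = al l" if l: "l < 6" "al l \<notin> {x,y}" for l
  proof -
    have "al l \<in> {1..5}" "al l \<noteq> al i0" using R l x_def by auto
    then obtain j where j: "j<6" "j \<noteq> i0" "be j = al l" using FA i0 by blast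
    have "j = l"
    proof (rule ccontr)
      assume "j \<noteq> l" then show False using P[rule_format, of l j] l j by auto
    qed
    then show ?thesis using j by simp
  qed
  have S2: "al l = be l" if l: "l < 6" "be l \<notin> {x,y}" for l
  proof -
    have "be l \<in> {1..5}" "be l \<noteq> be j0" using R l y_def by auto
    then obtain i where i: "i<6" "i \<noteq> j0" "al i = be l" using FB j0 by blast
    have "i = l"
    proof (rule ccontr)
      assume "i \<noteq> l" then show False using P[rule_format, of i l] l i by auto
    qed
    then show ?thesis using i by simp
  qed
  define Mt where "Mt = {l. l < 6 \<and> al l = be l}"
  define Nm where "Nm = {l. l < 6 \<and> al l \<noteq> be l}"
  have Un_xy: "al l \<in> {x,y} \<and> be l \<in> {x,y}" if "l \<in> Nm" for l
  proof -
    have l6: "l < 6" and ne: "al l \<noteq> be l" using that unfolding Nm_def by auto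
    have "al l \<in> {x,y}"
    proof (rule ccontr)
      assume "al l \<notin> {x,y}" then have "be l = al l" using S1 l6 by blast
      then show False using ne by simp
    qed
    moreover have "be l \<in> {x,y}"
    proof (rule ccontr)
      assume "be l \<notin> {x,y}" then have "al l = be l" using S2 l6 by blast
      then show False using ne by simp
    qed
    ultimately show ?thesis by simp
  qed
  have injM: "inj_on al Mt"
  proof (rule inj_onI)
    fix l l' assume l: "l \<in> Mt" "l' \<in> Mt" "al l = al l'"
    show "l = l'"
    proof (rule ccontr)
      assume "l \<noteq> l'"
      then show False using P[rule_format, of l l'] l unfolding Mt_def by auto
    qed
  qed
  have Un_ne: "Nm \<noteq> {}"
  proof
    assume "Nm = {}"
    then have "Mt = {..<6}" unfolding Mt_def Nm_def by auto
    then have "card (al ` Mt) = 6" using card_image[OF injM] by simp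
    moreover have "al ` Mt \<subseteq> {1..5}" using R unfolding Mt_def by auto
    then have "card (al ` Mt) \<le> 5" using card_mono[of "{1..5::nat}"] by fastforce
    ultimately show False by simp
  qed
  then obtain r where r: "r \<in> Nm" by blast
  define p where "p = al r"
  define q where "q = be r"
  have r6: "r < 6" using r unfolding Nm_def by simp
  have pq: "p \<noteq> q" using r unfolding Nm_def p_def q_def by simp
  have pqxy: "{p,q} = {x,y}" using Un_xy[OF r] pq unfolding p_def q_def by auto
  have xy: "x \<noteq> y" using pqxy pq by auto
  have orient: "al l = p \<and> be l = q" if l: "l \<in> Nm" for l
  proof -
    have l6: "l < 6" and ne: "al l \<noteq> be l" using l unfolding Nm_def by auto
    have a1: "al l \<in> {p,q}" "be l \<in> {p,q}" using Un_xy[OF l] pqxy by auto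
    have "al l \<noteq> q"
    proof
      assume h: "al l = q"
      then have "l \<noteq> r" using pq p_def by auto
      then show False using P[rule_format, of l r] l6 r6 h q_def by auto
    qed
    moreover have "be l \<noteq> p"
    proof
      assume h: "be l = p"
      then have "l \<noteq> r" using pq q_def by auto
      then show False using P[rule_format, of r l] l6 r6 h p_def by auto
    qed
    ultimately show ?thesis using a1 by auto
  qed
  have Mcol: "al l \<notin> {x,y}" if l: "l \<in> Mt" for l
  proof
    assume h: "al l \<in> {x,y}"
    have l6: "l < 6" and eq: "al l = be l" using l unfolding Mt_def by auto
    have lr: "l \<noteq> r" using l r unfolding Mt_def Nm_def by auto
    have "al l = p \<or> al l = q" using h pqxy by auto
    then show False
    proof
      assume "al l = p"
      then show False using P[rule_format, of r l] l6 r6 lr eq p_def by auto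
    next
      assume "al l = q"
      then show False using P[rule_format, of l r] l6 r6 lr eq q_def by auto
    qed
  qed
  have part: "Mt \<union> Nm = {..<6}" "Mt \<inter> Nm = {}" unfolding Mt_def Nm_def by auto
  have fin: "finite Mt" "finite Nm" unfolding Mt_def Nm_def by auto
  have cardsum: "card Mt + card Nm = 6"
    using card_Un_disjoint[OF fin part(2)] part(1) by simp
  have cover: "{1..5} - {x,y} \<subseteq> al ` Mt"
  proof
    fix w assume w: "w \<in> {1..5} - {x,y}"
    then have "w \<in> {1..5}" "w \<noteq> al i0" using x_def by auto
    then obtain j where j: "j<6" "j \<noteq> i0" "be j = w" using FA i0 by blast
    have "j \<notin> Nm" using Un_xy j w by auto
    then have "j \<in> Mt" using j unfolding Mt_def Nm_def by auto
    then show "w \<in> al ` Mt" using j unfolding Mt_def by force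
  qed
  have c3: "card ({1..5::nat} - {x,y}) = 3" using x15 y15 xy by (simp add: card_Diff_subset)
  have "card ({1..5::nat} - {x,y}) \<le> card (al ` Mt)"
    using cover fin(1) by (simp add: card_mono)
  also have "\<dots> = card Mt" using card_image[OF injM] .
  finally have cM: "card Mt \<ge> 3" using c3 by simp
  have cUn: "card Nm \<le> 3" using cM cardsum by simp
  have pxy: "p \<in> {x,y}" "q \<in> {x,y}" using pqxy by auto
  have p15: "p \<in> {1..5}" "q \<in> {1..5}" using pxy x15 y15 by auto
  have UAsub: "UA \<subseteq> Nm"
  proof
    fix l assume l: "l \<in> UA"
    show "l \<in> Nm"
    proof (rule ccontr)
      assume "l \<notin> Nm"
      then have lM: "l \<in> Mt" using l UA6 unfolding Mt_def Nm_def by auto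
      have "p \<noteq> al l" using Mcol[OF lM] pxy by auto
      then obtain j where j: "j<6" "j \<noteq> l" "be j = p" using FA l p15 by blast
      show False
      proof (cases "j \<in> Nm")
        case True then show False using orient[OF True] j pq by auto
      next
        case False
        then have jM: "j \<in> Mt" using j unfolding Mt_def Nm_def by auto
        then have "be j = al j" unfolding Mt_def by simp
        then show False using Mcol[OF jM] j pxy by auto
      qed
    qed
  qed
  have UBsub: "UB \<subseteq> Nm"
  proof
    fix l assume l: "l \<in> UB"
    show "l \<in> Nm"
    proof (rule ccontr)
      assume "l \<notin> Nm"
      then have lM: "l \<in> Mt" using l UB6 unfolding Mt_def Nm_def by auto
      have "q \<noteq> be l" using Mcol[OF lM] pxy lM unfolding Mt_def by auto
      then obtain i where i: "i<6" "i \<noteq> l" "al i = q" using FB l p15 by blast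
      show False
      proof (cases "i \<in> Nm")
        case True then show False using orient[OF True] i pq by auto
      next
        case False
        then have iM: "i \<in> Mt" using i unfolding Mt_def Nm_def by auto
        then show False using Mcol[OF iM] i pxy by auto
      qed
    qed
  qed
  have cA: "card UA \<le> card Nm" using UAsub fin(2) by (simp add: card_mono)
  have cB: "card UB \<le> card Nm" using UBsub fin(2) by (simp add: card_mono)
  have eqA: "UA = Nm" using card_subset_eq[OF fin(2) UAsub] cA cB cU cUn by simp
  have eqB: "UB = Nm" using card_subset_eq[OF fin(2) UBsub] cA cB cU cUn by simp
  show ?thesis
  proof (intro exI conjI)
    show "x \<in> {1..5}" "y \<in> {1..5}" "x \<noteq> y" "r < 6" by (fact x15, fact y15, fact xy, fact r6)
    show "al r \<in> {x,y}" using pxy p_def by simp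
    show "\<forall>i<6. al i \<in> {x,y} \<longrightarrow> i \<in> UA"
    proof (intro allI impI)
      fix i :: nat assume "i < 6" "al i \<in> {x,y}"
      then have "i \<notin> Mt" using Mcol by blast
      then show "i \<in> UA" using eqA \<open>i<6\<close> unfolding Mt_def Nm_def by auto
    qed
    show "\<forall>j<6. be j \<in> {x,y} \<longrightarrow> j \<in> UB"
    proof (intro allI impI)
      fix j :: nat assume j: "j < 6" "be j \<in> {x,y}"
      have "j \<notin> Mt"
      proof
        assume jm: "j \<in> Mt"
        then have "al j = be j" unfolding Mt_def by simp
        then show False using Mcol[OF jm] j by simp
      qed
      then show "j \<in> UB" using eqB j unfolding Mt_def Nm_def by auto
    qed
  qed
qed



lemma core:
  fixes al be :: "nat \<Rightarrow> nat" and UA UB :: "nat set"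
  assumes R: "\<forall>i<6. al i \<in> {1..5} \<and> be i \<in> {1..5}"
  and P: "\<forall>i<6. \<forall>j<6. i \<noteq> j \<longrightarrow> al i \<noteq> be j"
  and FA: "\<forall>i\<in>UA. \<forall>x\<in>{1..5}. x \<noteq> al i \<longrightarrow> (\<exists>j<6. j \<noteq> i \<and> be j = x)"
  and FB: "\<forall>j\<in>UB. \<forall>x\<in>{1..5}. x \<noteq> be j \<longrightarrow> (\<exists>i<6. i \<noteq> j \<and> al i = x)"
  and UA6: "UA \<subseteq> {..<6}" and UB6: "UB \<subseteq> {..<6}" and cU: "card UA + card UB \<ge> 6"
  shows "\<exists>x y r. x \<in> {1..5} \<and> y \<in> {1..5} \<and> x \<noteq> y \<and> r < 6 \<and> al r \<in> {x,y} \<and>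
     (\<forall>i<6. al i \<in> {x,y} \<longrightarrow> i \<in> UA) \<and> (\<forall>j<6. be j \<in> {x,y} \<longrightarrow> j \<in> UB)"
proof (cases "UA = {}")
  case True
  then have "card UB \<ge> 6" using cU by simp
  moreover have "card UB \<le> card {..<6::nat}" using UB6 by (intro card_mono) auto
  ultimately have "card UB = card {..<6::nat}" by simp
  then have UBall: "UB = {..<6}" using card_subset_eq[OF _ UB6] by simp
  have False
  proof (rule caseA[of be al])
    show "\<forall>i<6. be i \<in> {1..5} \<and> al i \<in> {1..5}" using R by blast
    show "\<forall>i<6. \<forall>j<6. i \<noteq> j \<longrightarrow> be i \<noteq> al j"
    proof (intro allI impI)
      fix i j :: nat assume "i<6" "j<6" "i \<noteq> j"
      then show "be i \<noteq> al j" using P[rule_format, of j i] by auto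
    qed
    show "\<forall>i<6. \<forall>x\<in>{1..5}. x \<noteq> be i \<longrightarrow> (\<exists>j<6. j \<noteq> i \<and> al j = x)"
      using FB UBall by blast
  qed
  then show ?thesis ..
next
  case ne: False
  show ?thesis
  proof (cases "UB = {}")
    case True
    then have "card UA \<ge> 6" using cU by simp
    moreover have "card UA \<le> card {..<6::nat}" using UA6 by (intro card_mono) auto
    ultimately have "card UA = card {..<6::nat}" by simp
    then have UAall: "UA = {..<6}" using card_subset_eq[OF _ UA6] by simp
    have False
    proof (rule caseA[of al be])
      show "\<forall>i<6. al i \<in> {1..5} \<and> be i \<in> {1..5}" using R by blast
      show "\<forall>i<6. \<forall>j<6. i \<noteq> j \<longrightarrow> al i \<noteq> be j" using P by blast
      show "\<forall>i<6. \<forall>x\<in>{1..5}. x \<noteq> al i \<longrightarrow> (\<exists>j<6. j \<noteq> i \<and> be j = x)"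
        using FA UAall by blast
    qed
    then show ?thesis ..
  next
    case False
    then obtain j0 where j0: "j0 \<in> UB" by blast
    obtain i0 where i0: "i0 \<in> UA" using ne by blast
    show ?thesis by (rule case1[OF R P FA FB UA6 UB6 cU i0 j0])
  qed
qed

definition V0 :: "nat set" where "V0 = {..<12}"
definition E0 :: "nat set set" where "E0 = {{i, j+6} | i j. i < 6 \<and> j < 6 \<and> i \<noteq> j}"

lemma edgeE: "{u,w} \<in> E0 \<longleftrightarrow>
   (u < 6 \<and> 6 \<le> w \<and> w < 12 \<and> w \<noteq> u+6) \<or> (w < 6 \<and> 6 \<le> u \<and> u < 12 \<and> u \<noteq> w+6)"
proof
  assume "{u,w} \<in> E0"
  then obtain i j where ij: "i<6" "j<6" "i\<noteq>j" "{u,w} = {i,j+6}" unfolding E0_def by blast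
  then have "(u = i \<and> w = j+6) \<or> (u = j+6 \<and> w = i)" by (simp add: doubleton_eq_iff)
  then show "(u < 6 \<and> 6 \<le> w \<and> w < 12 \<and> w \<noteq> u+6) \<or> (w < 6 \<and> 6 \<le> u \<and> u < 12 \<and> u \<noteq> w+6)"
    using ij by auto
next
  assume h: "(u < 6 \<and> 6 \<le> w \<and> w < 12 \<and> w \<noteq> u+6) \<or> (w < 6 \<and> 6 \<le> u \<and> u < 12 \<and> u \<noteq> w+6)"
  show "{u,w} \<in> E0"
  proof (cases "u < 6")
    case True
    then have "6 \<le> w" "w < 12" "w \<noteq> u+6" using h by auto
    then have "{u,w} = {u, (w-6)+6} \<and> u < 6 \<and> w-6 < 6 \<and> u \<noteq> w-6" using True by auto
    then show ?thesis unfolding E0_def by blast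
  next
    case False
    then have "w < 6" "6 \<le> u" "u < 12" "u \<noteq> w+6" using h by auto
    then have "{u,w} = {w, (u-6)+6} \<and> w < 6 \<and> u-6 < 6 \<and> w \<noteq> u-6" by auto
    then show ?thesis unfolding E0_def by blast
  qed
qed

lemma E0_form: "e \<in> E0 \<Longrightarrow> \<exists>i j. i<6 \<and> j<6 \<and> i\<noteq>j \<and> e = {i,j+6}"
  unfolding E0_def by blast

lemma fact1:
  assumes pc: "proper_colouring V E k c" and ext: "\<forall>v\<in>S. c v = p v"
  and uq: "\<And>c'. proper_colouring V E k c' \<Longrightarrow> \<forall>v\<in>S. c' v = p v \<Longrightarrow> c' = c"
  and u: "u \<in> V" "u \<notin> S" and x: "x \<in> {1..k}" "x \<noteq> c u" and loop: "{u,u} \<notin> E"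
  shows "\<exists>w. {u,w} \<in> E \<and> c w = x"
proof (rule ccontr)
  assume no: "\<not> (\<exists>w. {u,w} \<in> E \<and> c w = x)"
  define c' where "c' = c(u := x)"
  have pc': "proper_colouring V E k c'"
    unfolding proper_colouring_def
  proof (intro conjI allI impI ballI)
    fix v assume "v \<in> V" then show "c' v \<in> {1..k}" using pc x unfolding c'_def proper_colouring_def by auto
  next
    fix v assume "v \<notin> V" then show "c' v = 0" using pc u unfolding c'_def proper_colouring_def by auto
  next
    fix a b assume ab: "{a,b} \<in> E"
    show "c' a \<noteq> c' b"
    proof (cases "a = u")
      case True
      show ?thesis
      proof (cases "b = u")
        case True then show ?thesis using ab loop \<open>a = u\<close> by simp
      next
        case False then show ?thesis using ab no \<open>a = u\<close> unfolding c'_def by auto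
      qed
    next
      case False
      show ?thesis
      proof (cases "b = u")
        case True
        then have "{u,a} \<in> E" using ab by (simp add: insert_commute)
        then show ?thesis using no True False unfolding c'_def by auto
      next
        case bF: False then show ?thesis using False ab pc unfolding c'_def proper_colouring_def by auto
      qed
    qed
  qed
  have "\<forall>v\<in>S. c' v = p v" using ext u unfolding c'_def by auto
  then have "c' = c" using uq pc' by blast
  then have "c' u = c u" by simp
  then show False using x unfolding c'_def by simp
qed

lemma loop0: "{u,u} \<notin> E0" using edgeE[of u u] by auto

lemma lower:
  assumes SV: "S \<subseteq> V0" and cS: "card S \<le> 6"
  shows "\<not> (\<exists>!c. proper_colouring V0 E0 5 c \<and> (\<forall>v\<in>S. c v = p v))"
proof
  assume "\<exists>!c. proper_colouring V0 E0 5 c \<and> (\<forall>v\<in>S. c v = p v)"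
  then obtain c where pc: "proper_colouring V0 E0 5 c" and ext: "\<forall>v\<in>S. c v = p v"
    and uq: "\<And>c'. proper_colouring V0 E0 5 c' \<Longrightarrow> \<forall>v\<in>S. c' v = p v \<Longrightarrow> c' = c" by blast
  define al where "al i = c i" for i
  define be where "be i = c (i+6)" for i
  define UA where "UA = {i. i < 6 \<and> i \<notin> S}"
  define UB where "UB = {j. j < 6 \<and> j+6 \<notin> S}"
  have R: "\<forall>i<6. al i \<in> {1..5} \<and> be i \<in> {1..5}"
    using pc unfolding proper_colouring_def al_def be_def V0_def by auto
  have P: "\<forall>i<6. \<forall>j<6. i \<noteq> j \<longrightarrow> al i \<noteq> be j"
  proof (intro allI impI)
    fix i j :: nat assume "i<6" "j<6" "i\<noteq>j"
    then have "{i, j+6} \<in> E0" by (simp add: edgeE)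
    then show "al i \<noteq> be j" using pc unfolding proper_colouring_def al_def be_def by blast
  qed
  have FA: "\<forall>i\<in>UA. \<forall>x\<in>{1..5}. x \<noteq> al i \<longrightarrow> (\<exists>j<6. j \<noteq> i \<and> be j = x)"
  proof (intro ballI impI)
    fix i x assume i: "i \<in> UA" and x: "x \<in> {1..5::nat}" and xn: "x \<noteq> al i"
    have iV: "i \<in> V0" "i \<notin> S" "i < 6" using i unfolding UA_def V0_def by auto
    obtain w where w: "{i,w} \<in> E0" "c w = x"
      using fact1[OF pc ext uq iV(1) iV(2) _ _ loop0] x xn unfolding al_def by auto
    have "6 \<le> w" "w < 12" "w \<noteq> i+6" using w(1) iV(3) by (auto simp: edgeE)
    then have "w-6 < 6 \<and> w-6 \<noteq> i \<and> be (w-6) = x" using w(2) unfolding be_def by auto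
    then show "\<exists>j<6. j \<noteq> i \<and> be j = x" by blast
  qed
  have FB: "\<forall>j\<in>UB. \<forall>x\<in>{1..5}. x \<noteq> be j \<longrightarrow> (\<exists>i<6. i \<noteq> j \<and> al i = x)"
  proof (intro ballI impI)
    fix j x assume j: "j \<in> UB" and x: "x \<in> {1..5::nat}" and xn: "x \<noteq> be j"
    have jV: "j+6 \<in> V0" "j+6 \<notin> S" "j < 6" using j unfolding UB_def V0_def by auto
    obtain w where w: "{j+6,w} \<in> E0" "c w = x"
      using fact1[OF pc ext uq jV(1) jV(2) _ _ loop0] x xn unfolding be_def by auto
    have "w < 6" "w \<noteq> j" using w(1) jV(3) by (auto simp: edgeE)
    then show "\<exists>i<6. i \<noteq> j \<and> al i = x" using w(2) unfolding al_def by blast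
  qed
  have UA6: "UA \<subseteq> {..<6}" and UB6: "UB \<subseteq> {..<6}" unfolding UA_def UB_def by auto
  have finS: "finite S" using SV finite_subset unfolding V0_def by blast
  have "card (V0 - S) = 12 - card S" using card_Diff_subset[OF finS SV] unfolding V0_def by simp
  then have c1: "card (V0 - S) \<ge> 6" using cS by simp
  have sub: "V0 - S \<subseteq> UA \<union> (\<lambda>j. j+6) ` UB"
  proof
    fix v assume v: "v \<in> V0 - S"
    show "v \<in> UA \<union> (\<lambda>j. j+6) ` UB"
    proof (cases "v < 6")
      case True then show ?thesis using v unfolding UA_def by auto
    next
      case False
      then have "v = (v-6)+6" "v-6 < 6" using v unfolding V0_def by auto
      then have "v-6 \<in> UB" using v unfolding UB_def by auto
      then show ?thesis using \<open>v = (v-6)+6\<close> by blast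
    qed
  qed
  have finA: "finite UA" and finB: "finite UB" using UA6 UB6 finite_subset by blast+
  have "card (V0 - S) \<le> card (UA \<union> (\<lambda>j. j+6) ` UB)" using sub finA finB by (intro card_mono) auto
  also have "\<dots> \<le> card UA + card ((\<lambda>j. j+6) ` UB)" by (rule card_Un_le)
  also have "\<dots> \<le> card UA + card UB" using card_image_le[OF finB] by simp
  finally have cU: "card UA + card UB \<ge> 6" using c1 by simp
  obtain x y r where xy: "x \<in> {1..5}" "y \<in> {1..5}" "x \<noteq> y" "r < 6" "al r \<in> {x,y}"
    and hA: "\<forall>i<6. al i \<in> {x,y} \<longrightarrow> i \<in> UA" and hB: "\<forall>j<6. be j \<in> {x,y} \<longrightarrow> j \<in> UB"
    using core[OF R P FA FB UA6 UB6 cU] by blast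
  define c' where "c' v = (if c v = x then y else if c v = y then x else c v)" for v
  have pc': "proper_colouring V0 E0 5 c'"
    unfolding proper_colouring_def
  proof (intro conjI allI impI ballI)
    fix v assume "v \<in> V0" then show "c' v \<in> {1..5}" using pc xy unfolding c'_def proper_colouring_def by auto
  next
    fix v assume "v \<notin> V0" then show "c' v = 0" using pc xy unfolding c'_def proper_colouring_def by auto
  next
    fix a b assume "{a,b} \<in> E0"
    then have "c a \<noteq> c b" using pc unfolding proper_colouring_def by blast
    then show "c' a \<noteq> c' b" using xy unfolding c'_def by auto
  qed
  have ext': "\<forall>v\<in>S. c' v = p v"
  proof
    fix v assume vS: "v \<in> S"
    then have v12: "v < 12" using SV unfolding V0_def by auto
    have "c v \<notin> {x,y}"
    proof (cases "v < 6")
      case True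
      then have "v \<notin> UA" using vS unfolding UA_def by auto
      then show ?thesis using hA True unfolding al_def by blast
    next
      case False
      then have "v = (v-6)+6" "v-6 < 6" using v12 by auto
      then have "v-6 \<notin> UB" using vS unfolding UB_def by auto
      then have "be (v-6) \<notin> {x,y}" using hB \<open>v-6<6\<close> by blast
      then show ?thesis using \<open>v = (v-6)+6\<close> unfolding be_def by metis
    qed
    then show "c' v = p v" using ext vS unfolding c'_def by auto
  qed
  have "c' = c" using uq[OF pc' ext'] .
  then have "c' r = c r" by simp
  then show False using xy unfolding c'_def al_def by auto
qed

lemma sg: "simple_graph V0 E0"
  unfolding simple_graph_def
proof (intro conjI ballI)
  show "finite V0" unfolding V0_def by simp
next
  fix e assume "e \<in> E0"
  then obtain i j where "i<6" "j<6" "i\<noteq>j" "e = {i,j+6}" using E0_form by blast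
  then have "i \<noteq> j+6 \<and> i \<in> V0 \<and> j+6 \<in> V0 \<and> e = {i, j+6}" unfolding V0_def by auto
  then show "\<exists>u v. u \<noteq> v \<and> u \<in> V0 \<and> v \<in> V0 \<and> e = {u, v}" by blast
qed

lemma rsym:
  assumes "(\<lambda>x y. {x, y} \<in> E0)\<^sup>*\<^sup>* a b" shows "(\<lambda>x y. {x, y} \<in> E0)\<^sup>*\<^sup>* b a"
  using assms
proof (induction rule: rtranclp.induct)
  case (rtrancl_refl a) then show ?case by simp
next
  case (rtrancl_into_rtrancl a b c)
  have "{c,b} \<in> E0" using rtrancl_into_rtrancl.hyps(2) by (simp add: insert_commute)
  then show ?case using rtrancl_into_rtrancl.IH by (simp add: converse_rtranclp_into_rtranclp)
qed

lemma reach0: assumes "u \<in> V0" shows "(\<lambda>x y. {x, y} \<in> E0)\<^sup>*\<^sup>* 0 u"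
proof -
  let ?R = "\<lambda>x y. {x, y} \<in> E0"
  have u12: "u < 12" using assms unfolding V0_def by simp
  show ?thesis
  proof (cases "u < 6")
    case True
    show ?thesis
    proof (cases "u = 0")
      case True then show ?thesis by simp
    next
      case u0: False
      show ?thesis
      proof (cases "u = 1")
        case True
        have "?R 0 8" "?R 8 1" by (simp_all add: edgeE)
        then show ?thesis using True by (meson r_into_rtranclp rtranclp.rtrancl_into_rtrancl)
      next
        case False
        have "?R 0 7" "?R 7 u" using False \<open>u<6\<close> by (simp_all add: edgeE)
        then show ?thesis by (meson r_into_rtranclp rtranclp.rtrancl_into_rtrancl)
      qed
    qed
  next
    case False
    show ?thesis
    proof (cases "u = 6")
      case True
      have "?R 0 7" "?R 7 2" "?R 2 6" by (simp_all add: edgeE)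
      then show ?thesis using True by (meson r_into_rtranclp rtranclp.rtrancl_into_rtrancl)
    next
      case u6: False
      have "?R 0 u" using u6 False u12 by (simp add: edgeE)
      then show ?thesis by (rule r_into_rtranclp)
    qed
  qed
qed

lemma cg: "connected_graph V0 E0"
  unfolding connected_graph_def
proof (intro conjI ballI)
  have "(0::nat) \<in> V0" unfolding V0_def by simp
  then show "V0 \<noteq> {}" by blast
next
  fix u v assume "u \<in> V0" "v \<in> V0"
  then have "(\<lambda>x y. {x, y} \<in> E0)\<^sup>*\<^sup>* u 0" "(\<lambda>x y. {x, y} \<in> E0)\<^sup>*\<^sup>* 0 v"
    using reach0 rsym by blast+
  then show "(\<lambda>x y. {x, y} \<in> E0)\<^sup>*\<^sup>* u v" by (rule rtranclp_trans)
qed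

lemma bg: "bipartite_graph V0 E0"
  unfolding bipartite_graph_def
proof (intro exI conjI allI impI)
  show "{..<6} \<union> {6..<12} = V0" unfolding V0_def by auto
  show "{..<6::nat} \<inter> {6..<12} = {}" by auto
next
  fix u v assume "{u, v} \<in> E0"
  then show "u \<in> {..<6} \<and> v \<in> {6..<12} \<or> u \<in> {6..<12} \<and> v \<in> {..<6}" by (auto simp: edgeE)
qed

definition c2 :: "nat \<Rightarrow> nat" where "c2 v = (if v < 6 then 1 else if v < 12 then 2 else 0)"

lemma c2_proper: "k \<ge> 2 \<Longrightarrow> proper_colouring V0 E0 k c2"
  unfolding proper_colouring_def
proof (intro conjI allI impI ballI)
  fix v assume "k \<ge> 2" "v \<in> V0" then show "c2 v \<in> {1..k}" unfolding c2_def V0_def by auto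
next
  fix v assume "v \<notin> V0" then show "c2 v = 0" unfolding c2_def V0_def by auto
next
  fix u v assume "{u,v} \<in> E0" then show "c2 u \<noteq> c2 v" unfolding c2_def by (auto simp: edgeE)
qed

lemma chi: "chromatic_number V0 E0 \<le> 5"
proof -
  have "chromatic_number V0 E0 \<le> 2"
    unfolding chromatic_number_def by (rule Least_le) (use c2_proper in auto)
  then show ?thesis by simp
qed

definition c6 :: "nat \<Rightarrow> nat" where "c6 v = (if v < 6 then v+1 else if v < 12 then v-5 else 0)"

lemma sn6: "sn V0 E0 6 \<le> 6"
proof -
  have "\<exists>!c. proper_colouring V0 E0 6 c \<and> (\<forall>v\<in>{..<6}. c v = v+1)"
  proof (rule ex1I[of _ c6])
    show "proper_colouring V0 E0 6 c6 \<and> (\<forall>v\<in>{..<6}. c6 v = v+1)"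
      unfolding proper_colouring_def
    proof (intro conjI allI impI ballI)
      fix v assume "v \<in> V0" then show "c6 v \<in> {1..6}" unfolding c6_def V0_def by auto
    next
      fix v assume "v \<notin> V0" then show "c6 v = 0" unfolding c6_def V0_def by auto
    next
      fix u v assume "{u,v} \<in> E0" then show "c6 u \<noteq> c6 v" unfolding c6_def by (auto simp: edgeE)
    next
      fix v :: nat assume "v \<in> {..<6}" then show "c6 v = v+1" unfolding c6_def by auto
    qed
  next
    fix c assume h: "proper_colouring V0 E0 6 c \<and> (\<forall>v\<in>{..<6}. c v = v+1)"
    show "c = c6"
    proof
      fix v
      show "c v = c6 v"
      proof (cases "v < 6")
        case True then show ?thesis using h unfolding c6_def by auto
      next
        case F6: False
        show ?thesis
        proof (cases "v < 12")
          case False then show ?thesis using h unfolding c6_def proper_colouring_def V0_def by auto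
        next
          case True
          have cv: "c v \<in> {1..6}" using h True unfolding proper_colouring_def V0_def by auto
          show ?thesis
          proof (rule ccontr)
            assume ne: "c v \<noteq> c6 v"
            define i where "i = c v - 1"
            have i6: "i < 6" "c v = i + 1" using cv unfolding i_def by auto
            have "i \<noteq> v - 6" using ne F6 True i6 unfolding c6_def by auto
            then have "{i, v} \<in> E0" using i6 F6 True by (auto simp: edgeE)
            then have "c i \<noteq> c v" using h unfolding proper_colouring_def by blast
            moreover have "c i = i + 1" using h i6 by auto
            ultimately show False using i6 by simp
          qed
        qed
      qed
    qed
  qed
  then have U: "\<exists>!c. proper_colouring V0 E0 6 c \<and> (\<forall>v\<in>{..<6}. c v = v+1)" .
  have "\<exists>S p. S \<subseteq> V0 \<and> card S = 6 \<and> (\<exists>!c. proper_colouring V0 E0 6 c \<and> (\<forall>v\<in>S. c v = p v))"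
  proof (intro exI conjI)
    show "{..<6} \<subseteq> V0" unfolding V0_def by auto
    show "card {..<6::nat} = 6" by simp
    show "\<exists>!c. proper_colouring V0 E0 6 c \<and> (\<forall>v\<in>{..<6}. c v = v+1)" by (fact U)
  qed
  then show ?thesis unfolding sn_def by (rule Least_le)
qed

lemma sn5: "sn V0 E0 5 \<ge> 7"
proof -
  let ?P = "\<lambda>n. \<exists>S p. S \<subseteq> V0 \<and> card S = n \<and> (\<exists>!c. proper_colouring V0 E0 5 c \<and> (\<forall>v\<in>S. c v = p v))"
  have "?P 12"
  proof (intro exI conjI)
    show "V0 \<subseteq> V0" by simp
    show "card V0 = 12" unfolding V0_def by simp
    show "\<exists>!c. proper_colouring V0 E0 5 c \<and> (\<forall>v\<in>V0. c v = c2 v)"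
    proof (rule ex1I[of _ c2])
      show "proper_colouring V0 E0 5 c2 \<and> (\<forall>v\<in>V0. c2 v = c2 v)" using c2_proper by simp
    next
      fix c assume h: "proper_colouring V0 E0 5 c \<and> (\<forall>v\<in>V0. c v = c2 v)"
      show "c = c2"
      proof
        fix v show "c v = c2 v"
        proof (cases "v \<in> V0")
          case True then show ?thesis using h by blast
        next
          case False
          have "\<forall>v. v \<notin> V0 \<longrightarrow> c v = 0" using h unfolding proper_colouring_def by blast
          then have "c v = 0" using False by blast
          moreover have "c2 v = 0" using False unfolding c2_def V0_def by auto
          ultimately show ?thesis by simp
        qed
      qed
    qed
  qed
  then have PL: "?P (sn V0 E0 5)" unfolding sn_def by (rule LeastI)
  show ?thesis
  proof (rule ccontr)
    assume "\<not> 7 \<le> sn V0 E0 5"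
    then have "sn V0 E0 5 \<le> 6" by simp
    obtain S p where Sp: "S \<subseteq> V0" "card S = sn V0 E0 5"
      "\<exists>!c. proper_colouring V0 E0 5 c \<and> (\<forall>v\<in>S. c v = p v)" using PL by blast
    have "card S \<le> 6" using Sp(2) \<open>sn V0 E0 5 \<le> 6\<close> by simp
    then show False using lower[OF Sp(1), of p] Sp(3) by blast
  qed
qed

theorem theorem6:
  shows "\<exists>(V :: nat set) (E :: nat set set) (k :: nat).
           simple_graph V E \<and> connected_graph V E \<and> bipartite_graph V E \<and>
           k - 1 \<ge> chromatic_number V E \<and> sn V E k < sn V E (k - 1)"
proof (intro exI[of _ V0] exI[of _ E0] exI[of _ "6::nat"] conjI)
  show "simple_graph V0 E0" by (rule sg)
  show "connected_graph V0 E0" by (rule cg)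
  show "bipartite_graph V0 E0" by (rule bg)
  show "6 - 1 \<ge> chromatic_number V0 E0" using chi by simp
  show "sn V0 E0 6 < sn V0 E0 (6 - 1)" using sn6 sn5 by simp
qed

end
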